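(* Fix $c\in\{0,1\}$. Consider the family of distributions on $(0,1)\cup\{c\}$ with densities, with respect to the measure $\lambda+\delta_c$ (where $\lambda$ is Lebesgue measure on $(0,1)$ and $\delta_c$ is the point mass at $c$), $$\mathrm{bi}_c(y;\alpha,\mu,\phi)=\begin{cases}\alpha, & y=c,\\ (1-\alpha)f(y;\mu,\phi), & y\in(0,1),\end{cases}$$ indexed by $(\alpha,\mu,\phi)\in(0,1)\times(0,1)\times(0,\infty)$, where $$f(y;\mu,\phi)=\frac{\Gamma(\phi)}{\Gamma(\mu\phi)\Gamma((1-\mu)\phi)}\,y^{\mu\phi-1}(1-y)^{(1-\mu)\phi-1},\quad y\in(0,1),$$ is the beta density with mean $\mu$ and precision $\phi$. (For $c=0$ this is the zero-inflated beta distribution $\mathrm{BEZI}(\alpha,\mu,\phi)$, and for $c=1$ the one-inflated beta distribution $\mathrm{BEOI}(\alpha,\mu,\phi)$.) Then this family (for either choice of $c$) is a three-parameter exponential family of full rank.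
   Context: A family of densities $\{p_\theta:\theta\in\Theta\}$ with respect to a measure $\nu$ on a space $\mathcal Y$ is called a $k$-parameter exponential family of full rank if there are a one-to-one map $\theta\mapsto\eta(\theta)\in\mathbb R^k$, a statistic $T=(t_1,\dots,t_k):\mathcal Y\to\mathbb R^k$, a real function $B^*$ and a positive function $h$ on $\mathcal Y$ such that $p_\theta(y)=\exp\{\eta(\theta)^\top T(y)-B^*(\eta(\theta))\}h(y)$ for all $y$ and $\theta$, where neither the components $t_1,\dots,t_k$ nor the components of $\eta$ satisfy a linear constraint, and the set $\{\eta(\theta):\theta\in\Theta\}$ contains a $k$-dimensional open rectangle. *)

theory Defs
  imports "HOL-Analysis.Analysis"
begin

definition beta_dens :: "real \<Rightarrow> real \<Rightarrow> real \<Rightarrow> real" where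
  "beta_dens mu phi y =
     Gamma phi / (Gamma (mu * phi) * Gamma ((1 - mu) * phi))
     * y powr (mu * phi - 1) * (1 - y) powr ((1 - mu) * phi - 1)"

definition bi_dens :: "real \<Rightarrow> real \<times> real \<times> real \<Rightarrow> real \<Rightarrow> real" where
  "bi_dens c \<theta> y = (case \<theta> of (alpha, mu, phi) \<Rightarrow>
     (if y = c then alpha else (1 - alpha) * beta_dens mu phi y))"

definition bi_params :: "(real \<times> real \<times> real) set" where
  "bi_params = {0<..<1} \<times> {0<..<1} \<times> {0<..}"

definition bi_space :: "real \<Rightarrow> real set" where
  "bi_space c = {0<..<1} \<union> {c}"

definition bi_measure :: "real \<Rightarrow> real measure" where
  "bi_measure c = measure_of UNIV (sets borel)
     (\<lambda>A. emeasure lborel (A \<inter> {0<..<1}) + indicator A c)"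

definition exp_family_full_rank_rep ::
  "('t \<Rightarrow> 'y \<Rightarrow> real) \<Rightarrow> 't set \<Rightarrow> 'y set \<Rightarrow> 'y measure \<Rightarrow>
   ('t \<Rightarrow> real ^ 'k::finite) \<Rightarrow> ('y \<Rightarrow> real ^ 'k) \<Rightarrow> (real ^ 'k \<Rightarrow> real) \<Rightarrow> ('y \<Rightarrow> real) \<Rightarrow> bool"
where
  "exp_family_full_rank_rep p \<Theta> Y \<nu> \<eta> T B h \<longleftrightarrow>
     inj_on \<eta> \<Theta> \<and>
     (\<forall>y\<in>Y. h y > 0) \<and>
     (\<forall>\<theta>\<in>\<Theta>. \<forall>y\<in>Y. p \<theta> y = exp (\<eta> \<theta> \<bullet> T y - B (\<eta> \<theta>)) * h y) \<and>
     \<not> (\<exists>a b. a \<noteq> 0 \<and> (AE y in \<nu>. a \<bullet> T y = b)) \<and>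
     \<not> (\<exists>a b. a \<noteq> 0 \<and> (\<forall>\<theta>\<in>\<Theta>. a \<bullet> \<eta> \<theta> = b)) \<and>
     (\<exists>l u. (\<forall>i. l $ i < u $ i) \<and> box l u \<subseteq> \<eta> ` \<Theta>)"

end

theory Submission
  imports Defs
begin
lemma bi_measure_emeasure:
  assumes "A \<in> sets borel"
  shows "emeasure (bi_measure c) A = emeasure lborel (A \<inter> {0<..<1}) + indicator A c"
  unfolding bi_measure_def
proof (rule emeasure_measure_of_sigma)
  show "sigma_algebra UNIV (sets borel)"
    using sets.sigma_algebra_axioms[of borel] by simp
  show "positive (sets borel) (\<lambda>A. emeasure lborel (A \<inter> {0<..<1}) + indicator A c)"
    by (simp add: positive_def)
  show "countably_additive (sets borel) (\<lambda>A. emeasure lborel (A \<inter> {0<..<1}) + indicator A c)"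
    unfolding countably_additive_def
  proof (intro allI impI)
    fix F :: "nat \<Rightarrow> real set"
    assume F: "range F \<subseteq> sets borel" "disjoint_family F"
    have 1: "(\<Sum>i. emeasure lborel (F i \<inter> {0<..<1})) = emeasure lborel (\<Union>i. F i \<inter> {0<..<1})"
      using F by (intro suminf_emeasure) (auto simp: disjoint_family_on_def)
    have 3: "(\<Sum>i. (indicator (F i) c :: ennreal)) = indicator (\<Union>i. F i) c"
    proof (cases "\<exists>j. c \<in> F j")
      case True
      then obtain j where j: "c \<in> F j" by blast
      have "\<And>i. (indicator (F i) c :: ennreal) = (if i = j then 1 else 0)"
        using F(2) j by (auto simp: disjoint_family_on_def indicator_def)
      moreover have "(\<lambda>i. if i = j then (1::ennreal) else 0) sums 1"
        using sums_single[of j "\<lambda>_. (1::ennreal)"] by simp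
      ultimately show ?thesis using j by (simp add: sums_iff indicator_def) blast
    next
      case False
      then show ?thesis by (simp add: indicator_def)
    qed
    show "(\<Sum>i. emeasure lborel (F i \<inter> {0<..<1}) + indicator (F i) c) =
          emeasure lborel (\<Union> (range F) \<inter> {0<..<1}) + indicator (\<Union> (range F)) c"
      using 1 3 by (simp add: suminf_add[symmetric])
  qed
  show "A \<in> sets borel" by fact
qed

definition Cf :: "real \<Rightarrow> real \<Rightarrow> real" where
  "Cf p q = Gamma (p + q) / (Gamma p * Gamma q)"

definition eta :: "real \<times> real \<times> real \<Rightarrow> real ^ 3" where
  "eta \<theta> = (case \<theta> of (a, m, f) \<Rightarrow>
     vector [ln a - ln (1 - a) - ln (Cf (m * f) ((1 - m) * f)), m * f, (1 - m) * f])"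

definition Bt :: "real \<times> real \<times> real \<Rightarrow> real" where
  "Bt \<theta> = (case \<theta> of (a, m, f) \<Rightarrow> - ln ((1 - a) * Cf (m * f) ((1 - m) * f)))"

definition Tst :: "real \<Rightarrow> real \<Rightarrow> real ^ 3" where
  "Tst c y = vector [if y = c then 1 else 0, if y = c then 0 else ln y, if y = c then 0 else ln (1 - y)]"

definition hb :: "real \<Rightarrow> real \<Rightarrow> real" where
  "hb c y = (if y = c then 1 else 1 / (y * (1 - y)))"

lemma inner3: "(x :: real ^ 3) \<bullet> y = x$1 * y$1 + x$2 * y$2 + x$3 * y$3"
  by (simp add: inner_vec_def sum_3)

lemma Cf_pos: "p > 0 \<Longrightarrow> q > 0 \<Longrightarrow> Cf p q > 0"
  by (simp add: Cf_def)

lemma eta_inj: "inj_on eta bi_params"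
proof (rule inj_onI)
  fix x y assume x: "x \<in> bi_params" and y: "y \<in> bi_params" and e: "eta x = eta y"
  obtain a m f where xe: "x = (a, m, f)" by (cases x) auto
  obtain a' m' f' where ye: "y = (a', m', f')" by (cases y) auto
  have ranges: "0 < a" "a < 1" "0 < m" "m < 1" "0 < f" "0 < a'" "a' < 1" "0 < m'" "m' < 1" "0 < f'"
    using x y by (auto simp: bi_params_def xe ye)
  have e1: "ln a - ln (1 - a) - ln (Cf (m * f) ((1 - m) * f)) = ln a' - ln (1 - a') - ln (Cf (m' * f') ((1 - m') * f'))"
    and e2: "m * f = m' * f'" and e3: "(1 - m) * f = (1 - m') * f'"
    using e unfolding xe ye eta_def vec_eq_iff forall_3 by auto
  have ff: "f = f'" using e2 e3 by (simp add: algebra_simps)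
  have mm: "m = m'" using e2 ff ranges by simp
  have "ln a - ln (1 - a) = ln a' - ln (1 - a')" using e1 ff mm by simp
  then have "ln (a / (1 - a)) = ln (a' / (1 - a'))" using ranges by (simp add: ln_div)
  then have "a / (1 - a) = a' / (1 - a')" using ranges by (subst (asm) ln_inj_iff) auto
  then have "a = a'" using ranges by (simp add: field_simps) 
  then show "x = y" using xe ye ff mm by simp
qed

lemma density_eq:
  assumes c: "c = 0 \<or> c = 1" and th: "\<theta> \<in> bi_params" and y: "y \<in> bi_space c"
  shows "bi_dens c \<theta> y = exp (eta \<theta> \<bullet> Tst c y - Bt \<theta>) * hb c y"
proof -
  obtain a m f where xe: "\<theta> = (a, m, f)" by (cases \<theta>) auto
  have r: "0 < a" "a < 1" "0 < m" "m < 1" "0 < f"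
    using th by (auto simp: bi_params_def xe)
  define C where "C = Cf (m * f) ((1 - m) * f)"
  have Cp: "C > 0" unfolding C_def using r by (intro Cf_pos) auto
  have lnC: "ln ((1 - a) * C) = ln (1 - a) + ln C" using r Cp by (simp add: ln_mult)
  show ?thesis
  proof (cases "y = c")
    case True
    have "exp (eta \<theta> \<bullet> Tst c y - Bt \<theta>) * hb c y = exp (ln a)"
      using True by (simp add: inner3 eta_def Tst_def Bt_def hb_def xe C_def[symmetric] lnC)
    then show ?thesis using True r by (simp add: bi_dens_def xe)
  next
    case False
    then have y01: "0 < y" "y < 1" using y by (auto simp: bi_space_def)
    have bd: "beta_dens m f y = C * (exp (m * f * ln y) / y) * (exp ((1 - m) * f * ln (1 - y)) / (1 - y))"
    proof -
      have p1: "y powr (m * f - 1) = exp (m * f * ln y) / y"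
        using y01 by (simp add: powr_def exp_diff left_diff_distrib)
      have p2: "(1 - y) powr ((1 - m) * f - 1) = exp ((1 - m) * f * ln (1 - y)) / (1 - y)"
        using y01 by (simp add: powr_def exp_diff left_diff_distrib)
      have s: "m * f + (1 - m) * f = f" by (simp add: algebra_simps)
      show ?thesis unfolding beta_dens_def C_def Cf_def s p1 p2 by simp
    qed
    have "exp (eta \<theta> \<bullet> Tst c y - Bt \<theta>) * hb c y
        = exp (m * f * ln y + (1 - m) * f * ln (1 - y) + ln ((1 - a) * C)) * (1 / (y * (1 - y)))"
      using False by (simp add: inner3 eta_def Tst_def Bt_def hb_def xe C_def[symmetric])
    also have "\<dots> = (1 - a) * C * exp (m * f * ln y) * exp ((1 - m) * f * ln (1 - y)) / (y * (1 - y))"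
      using r Cp by (simp add: exp_add)
    also have "\<dots> = (1 - a) * beta_dens m f y" using bd by simp
    finally show ?thesis using False by (simp add: bi_dens_def xe)
  qed
qed

lemma eta_noconstr:
  assumes "\<forall>\<theta>\<in>bi_params. a \<bullet> eta \<theta> = b"
  shows "a = 0"
proof -
  have h: "\<And>x m f. 0 < x \<Longrightarrow> x < 1 \<Longrightarrow> 0 < m \<Longrightarrow> m < 1 \<Longrightarrow> 0 < f \<Longrightarrow>
     a$1 * (ln x - ln (1 - x) - ln (Cf (m * f) ((1 - m) * f))) + a$2 * (m * f) + a$3 * ((1 - m) * f) = b"
    using assms by (auto simp: bi_params_def inner3 eta_def)
  have e1: "a$1 * (ln (1/2) - ln (1/2) - ln (Cf 1 1)) + a$2 + a$3 = b"
    using h[of "1/2" "1/2" 2] by simp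
  have e2: "a$1 * (ln (1/3) - ln (2/3) - ln (Cf 1 1)) + a$2 + a$3 = b"
    using h[of "1/3" "1/2" 2] by simp
  have "ln (1/3) - ln (2/3) = - ln (2::real)"
    by (simp add: ln_div)
  moreover have "a$1 * (ln (1/3) - ln (2/3)) = 0" using e1 e2 unfolding right_diff_distrib by linarith
  ultimately have a1: "a$1 = 0" by simp
  have e3: "a$2 * 2 + a$3 * 2 = b" using h[of "1/2" "1/2" 4] a1 by simp
  have e4: "a$2 + a$3 * 3 = b" using h[of "1/2" "1/4" 4] a1 by simp
  have "a$2 = 0" "a$3 = 0" using e1 e3 e4 a1 by simp_all
  then show ?thesis using a1 by (simp add: vec_eq_iff forall_3)
qed

lemma eta_box: "box (vector [0, 1, 1]) (vector [1, 2, 2]) \<subseteq> eta ` bi_params"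
proof
  fix v :: "real ^ 3"
  assume "v \<in> box (vector [0, 1, 1]) (vector [1, 2, 2])"
  then have v: "v$2 > 0" "v$3 > 0" by (auto simp: mem_box_cart forall_3)
  define f where "f = v$2 + v$3"
  define m where "m = v$2 / f"
  define r where "r = exp (v$1) * Cf (v$2) (v$3)"
  define al where "al = r / (1 + r)"
  have fp: "f > 0" using v by (simp add: f_def)
  have mf: "m * f = v$2" "(1 - m) * f = v$3" using fp by (simp_all add: m_def f_def field_simps)
  have rp: "r > 0" using v by (simp add: r_def Cf_pos)
  have al: "0 < al" "al < 1" using rp by (simp_all add: al_def)
  have m: "0 < m" "m < 1" using v fp by (simp_all add: m_def f_def field_simps)
  have "1 - al = 1 / (1 + r)" using rp by (simp add: al_def field_simps)
  then have "ln al - ln (1 - al) = ln r" using rp by (simp add: al_def ln_div)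
  also have "\<dots> = v$1 + ln (Cf (v$2) (v$3))" using v Cf_pos[of "v$2" "v$3"] by (simp add: r_def ln_mult)
  finally have "eta (al, m, f) = v"
    by (simp add: eta_def mf vec_eq_iff forall_3)
  moreover have "(al, m, f) \<in> bi_params" using al m fp by (simp add: bi_params_def)
  ultimately show "v \<in> eta ` bi_params" by force
qed

lemma T_noconstr:
  assumes c: "c = 0 \<or> c = 1" and ae: "AE y in bi_measure c. a \<bullet> Tst c y = b"
  shows "a = 0"
proof -
  have sp: "space (bi_measure c) = UNIV" and st: "sets (bi_measure c) = sets borel"
    using sets.sigma_sets_eq[of borel] by (simp_all add: bi_measure_def)
  from ae obtain N where N: "{y \<in> space (bi_measure c). \<not> a \<bullet> Tst c y = b} \<subseteq> N"
    "N \<in> sets (bi_measure c)" "emeasure (bi_measure c) N = 0"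
    by (auto elim!: AE_E)
  have Nb: "N \<in> sets borel" using N(2) st by simp
  have "emeasure lborel (N \<inter> {0<..<1}) + indicator N c = 0"
    using N(3) bi_measure_emeasure[OF Nb] by simp
  then have N0: "emeasure lborel (N \<inter> {0<..<1}) = 0" and cN: "c \<notin> N"
    by (auto simp: indicator_def split: if_splits)
  have "a \<bullet> Tst c c = b" using cN N(1) sp by auto
  then have Pc: "a$1 = b" by (simp add: inner3 Tst_def)
  define g where "g y = a$2 * ln y + a$3 * ln (1 - y)" for y :: real
  have gin: "g y = b" if y: "0 < y" "y < 1" for y
  proof (rule ccontr)
    assume ne: "g y \<noteq> b"
    have "isCont g y" unfolding g_def using y by (intro continuous_intros) auto
    then have "(g \<longlongrightarrow> g y) (at y)" by (simp add: isCont_def)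
    then have ev1: "eventually (\<lambda>z. g z \<noteq> b) (at y)"
      using ne by (rule tendsto_imp_eventually_ne)
    have ev2: "eventually (\<lambda>z. z \<in> {0<..<1}) (at y)"
      using y by (intro eventually_at_in_open') auto
    from eventually_conj[OF ev1 ev2] obtain d where d0: "d > 0"
      "\<And>z. z \<noteq> y \<Longrightarrow> dist z y < d \<Longrightarrow> g z \<noteq> b \<and> z \<in> {0<..<1}"
      unfolding eventually_at by blast
    have d: "d > 0" "\<And>z. dist z y < d \<Longrightarrow> g z \<noteq> b \<and> z \<in> {0<..<1}"
      using d0 ne y by (metis greaterThanLessThan_iff)+
    have sub: "{y - d <..< y + d} \<subseteq> N \<inter> {0<..<1}"
    proof
      fix z assume "z \<in> {y - d <..< y + d}"
      then have "dist z y < d" by (auto simp: dist_real_def)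
      then have z: "g z \<noteq> b" "0 < z" "z < 1" using d(2) by auto
      then have "z \<noteq> c" using c by auto
      then have "\<not> a \<bullet> Tst c z = b" using z by (simp add: inner3 Tst_def g_def)
      then show "z \<in> N \<inter> {0<..<1}" using N(1) sp z by auto
    qed
    have "emeasure lborel {y - d <..< y + d} \<le> emeasure lborel (N \<inter> {0<..<1})"
      using sub Nb by (intro emeasure_mono) auto
    then show False using N0 d by simp
  qed
  have ln4: "ln (4::real) = 2 * ln 2"
    using ln_realpow[of 2 2] by simp
  have g2: "g (1/2) = b" and g4: "g (1/4) = b" and g34: "g (3/4) = b" by (auto intro: gin)
  have E1: "- (a$2 + a$3) * ln 2 = b" using g2 by (simp add: g_def ln_div algebra_simps)
  have E2: "- 2 * ln 2 * a$2 + (ln 3 - 2 * ln 2) * a$3 = b"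
    using g4 ln4 by (simp add: g_def ln_div algebra_simps)
  have E3: "(ln 3 - 2 * ln 2) * a$2 - 2 * ln 2 * a$3 = b"
    using g34 ln4 by (simp add: g_def ln_div algebra_simps)
  have l3: "ln (3::real) > 0" by simp
  have l32: "ln (3::real) < 2 * ln 2" 
  proof -
    have "ln (3::real) < ln 4" by (subst ln_less_cancel_iff) auto
    then show ?thesis using ln4 by simp
  qed
  have "ln 3 * (a$3 - a$2) = 0" using E2 E3 by (simp add: algebra_simps)
  then have a23: "a$3 = a$2" using l3 by simp
  have "(ln 3 - 2 * ln 2) * a$2 = 0" using E1 E2 a23 by (simp add: algebra_simps)
  then have "a$2 = 0" using l32 by simp
  then have "a$2 = 0" "a$3 = 0" "a$1 = 0" using a23 E1 Pc by auto
  then show ?thesis by (simp add: vec_eq_iff forall_3)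
qed

theorem proposition1:
  fixes c :: real
  assumes "c = 0 \<or> c = 1"
  shows "\<exists>(\<eta> :: real \<times> real \<times> real \<Rightarrow> real ^ 3) T B h.
           exp_family_full_rank_rep (bi_dens c) bi_params (bi_space c) (bi_measure c) \<eta> T B h"
proof (intro exI)
  let ?B = "\<lambda>v. Bt (inv_into bi_params eta v)"
  show "exp_family_full_rank_rep (bi_dens c) bi_params (bi_space c) (bi_measure c) eta (Tst c) ?B (hb c)"
    unfolding exp_family_full_rank_rep_def
  proof (intro conjI)
    show "inj_on eta bi_params" by (rule eta_inj)
    show "\<forall>y\<in>bi_space c. 0 < hb c y"
      by (auto simp: bi_space_def hb_def)
    show "\<forall>\<theta>\<in>bi_params. \<forall>y\<in>bi_space c. bi_dens c \<theta> y = exp (eta \<theta> \<bullet> Tst c y - ?B (eta \<theta>)) * hb c y"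
      using density_eq[OF assms] inv_into_f_f[OF eta_inj] by simp
    show "\<not> (\<exists>a b. a \<noteq> 0 \<and> (AE y in bi_measure c. a \<bullet> Tst c y = b))"
      using T_noconstr[OF assms] by blast
    show "\<not> (\<exists>a b. a \<noteq> 0 \<and> (\<forall>\<theta>\<in>bi_params. a \<bullet> eta \<theta> = b))"
      using eta_noconstr by blast
    show "\<exists>l u. (\<forall>i. l $ i < u $ i) \<and> box l u \<subseteq> eta ` bi_params"
      using eta_box by (intro exI[of _ "vector [0, 1, 1]"] exI[of _ "vector [1, 2, 2]"]) (simp add: forall_3)
  qed
qed

end
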